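(* Let $q\equiv 1\pmod 6$ be a prime power, let $\rho$ be a primitive element of $\mathbb F_q$, and let $\pi:(\mathbb Z_2^2)^*\to\mathbb Z_3$ be a bijection. Suppose $c=c^3_q(1,2)$ is odd and $l=(c+1)/2$. Then $\Gamma=\operatorname{Cay}(G_{l,2,q},S(\pi))$ is not strongly regular.
   Context: For an additive group $A$, $A^*=A\setminus\{0\}$. $G_{l,2,q}=\mathbb Z_l\oplus\mathbb Z_2^2\oplus\mathbb F_q$. $S_0=\{(g,0): g\in(\mathbb Z_l\oplus\mathbb Z_2^2)^*\}$; for $z\in(\mathbb Z_2^2)^*$, $S_{z,\pi}=\{(0,z,\rho^j): j\in\mathbb Z,\ j\equiv\pi(z)\pmod 3\}$; $S(\pi)=S_0\cup\bigcup_z S_{z,\pi}$; $\operatorname{Cay}(G_{l,2,q},S(\pi))$ has vertex set $G_{l,2,q}$ with $x\sim y$ iff $y-x\in S(\pi)$. Write $q=6r+1$; $C^3_q(i)=\{\rho^{3j+i}:0\le j\le 2r-1\}$ for $i\in\mathbb Z_3$, $c^3_q(a,b)=|(C^3_q(a)+1)\cap C^3_q(b)|$. A graph is strongly regular if it is non-empty, regular, every two adjacent vertices have a constant number $\lambda$ of common neighbours, and every two distinct non-adjacent vertices have a constant number $\mu$ of common neighbours. *)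

theory Defs
  imports Main
begin

(* Elements of G_{l,2,q} = Z_l (+) Z_2^2 (+) F_q are triples (a, z, u):
   a \<in> {0..<l} represents Z_l, z :: bool \<times> bool represents Z_2^2
   (addition = componentwise xor, zero = (False, False)), u :: 'a is in the
   finite field 'a with CARD('a) = q. *)
type_synonym 'a gvtx = "nat \<times> (bool \<times> bool) \<times> 'a"

definition z2zero :: "bool \<times> bool" where
  "z2zero = (False, False)"

definition G_carrier :: "nat \<Rightarrow> ('a::{finite,field}) gvtx set" where
  "G_carrier l = {0..<l} \<times> UNIV \<times> UNIV"

fun G_minus :: "nat \<Rightarrow> ('a::{finite,field}) gvtx \<Rightarrow> 'a gvtx \<Rightarrow> 'a gvtx" where
  "G_minus l (a, (z1, z2), u) (b, (w1, w2), v) =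
     ((a + l - b) mod l, (z1 \<noteq> w1, z2 \<noteq> w2), u - v)"

definition S0 :: "nat \<Rightarrow> ('a::{finite,field}) gvtx set" where
  "S0 l = {(a, z, 0) | a z. a < l \<and> (a, z) \<noteq> (0, z2zero)}"

(* S_{z,\<pi>} = {(0, z, \<rho>^j) : j \<in> Z, j \<equiv> \<pi>(z) mod 3};  \<pi>(z) \<in> {0,1,2} represents Z_3 *)
definition Sz :: "'a::{finite,field} \<Rightarrow> (bool \<times> bool \<Rightarrow> nat) \<Rightarrow> bool \<times> bool \<Rightarrow> 'a gvtx set" where
  "Sz \<rho> \<pi> z = {(0, z, \<rho> powi j) | j::int. j mod 3 = int (\<pi> z) mod 3}"

definition S_pi :: "nat \<Rightarrow> 'a::{finite,field} \<Rightarrow> (bool \<times> bool \<Rightarrow> nat) \<Rightarrow> 'a gvtx set" where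
  "S_pi l \<rho> \<pi> = S0 l \<union> (\<Union>z \<in> {z. z \<noteq> z2zero}. Sz \<rho> \<pi> z)"

definition cay_adj :: "nat \<Rightarrow> 'a::{finite,field} \<Rightarrow> (bool \<times> bool \<Rightarrow> nat) \<Rightarrow> 'a gvtx \<Rightarrow> 'a gvtx \<Rightarrow> bool" where
  "cay_adj l \<rho> \<pi> x y \<longleftrightarrow> G_minus l y x \<in> S_pi l \<rho> \<pi>"

definition primitive_element :: "'a::{finite,field} \<Rightarrow> bool" where
  "primitive_element \<rho> \<longleftrightarrow> \<rho> \<noteq> 0 \<and> (\<forall>x. x \<noteq> 0 \<longrightarrow> (\<exists>j::nat. x = \<rho> ^ j))"

(* cyclotomic classes of order 3: C^3_q(i) = {\<rho>^(3j+i) : 0 \<le> j \<le> 2r-1}, q = 6r+1 *)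
definition cyc_class :: "nat \<Rightarrow> 'a::{finite,field} \<Rightarrow> nat \<Rightarrow> 'a set" where
  "cyc_class q \<rho> i = {\<rho> ^ (3 * j + i) | j. j < 2 * ((q - 1) div 6)}"

definition cyc_number :: "nat \<Rightarrow> 'a::{finite,field} \<Rightarrow> nat \<Rightarrow> nat \<Rightarrow> nat" where
  "cyc_number q \<rho> a b = card ((\<lambda>x. x + 1) ` cyc_class q \<rho> a \<inter> cyc_class q \<rho> b)"

definition strongly_regular :: "'v set \<Rightarrow> ('v \<Rightarrow> 'v \<Rightarrow> bool) \<Rightarrow> bool" where
  "strongly_regular V E \<longleftrightarrow>
     (\<exists>x\<in>V. \<exists>y\<in>V. E x y) \<and>
     (\<exists>k lam mu :: nat.
        (\<forall>x\<in>V. card {y\<in>V. E x y} = k) \<and>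
        (\<forall>x\<in>V. \<forall>y\<in>V. E x y \<longrightarrow> card {w\<in>V. E x w \<and> E y w} = lam) \<and>
        (\<forall>x\<in>V. \<forall>y\<in>V. x \<noteq> y \<and> \<not> E x y \<longrightarrow> card {w\<in>V. E x w \<and> E y w} = mu))"

end

theory Submission
  imports Defs
begin

lemma fermat_ff:
  fixes x :: "'a::{finite,field}"
  assumes "x \<noteq> 0"
  shows "x ^ (card (UNIV::'a set) - 1) = 1"
proof -
  define N where "N = (UNIV - {0::'a})"
  have fin: "finite N" by simp
  have inj: "inj_on (\<lambda>y. x * y) N" using assms by (auto simp: inj_on_def)
  have im: "(\<lambda>y. x * y) ` N = N"
  proof
    show "(\<lambda>y. x * y) ` N \<subseteq> N" using assms by (auto simp: N_def)
    show "N \<subseteq> (\<lambda>y. x * y) ` N"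
    proof
      fix y assume "y \<in> N"
      then have "y = x * (y / x)" "y / x \<in> N" using assms by (auto simp: N_def)
      then show "y \<in> (\<lambda>y. x * y) ` N" by blast
    qed
  qed
  have "prod (\<lambda>y. y) N = prod (\<lambda>y. x * y) N"
    using prod.reindex[OF inj, of "\<lambda>y. y"] im by simp
  also have "\<dots> = x ^ card N * prod (\<lambda>y. y) N" by (simp add: prod.distrib)
  finally have "x ^ card N * prod (\<lambda>y. y) N = 1 * prod (\<lambda>y. y) N" by simp
  moreover have "prod (\<lambda>y. y) N \<noteq> 0" by (simp add: N_def)
  ultimately have "x ^ card N = 1" by simp
  moreover have "card N = card (UNIV::'a set) - 1" by (simp add: N_def card_Diff_singleton)
  ultimately show ?thesis by simp
qed

lemma mod3_cancel: "(x::nat) < 3 \<Longrightarrow> y < 3 \<Longrightarrow> (e + x) mod 3 = (e + y) mod 3 \<longleftrightarrow> x = y"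
  by presburger

locale cyc =
  fixes \<rho> :: "'a::{finite,field}"
  assumes prim: "primitive_element \<rho>"
    and q6: "card (UNIV::'a set) mod 6 = 1"
begin

definition n0 :: nat where "n0 = card (UNIV::'a set) - 1"
definition r :: nat where "r = n0 div 6"

lemma rho_nz: "\<rho> \<noteq> 0" using prim by (simp add: primitive_element_def)

lemma ex_pow: "x \<noteq> 0 \<Longrightarrow> \<exists>j. x = \<rho> ^ j"
  using prim by (simp add: primitive_element_def)

lemma card_ge2: "card (UNIV::'a set) \<ge> 2"
proof -
  have "{0::'a, 1} \<subseteq> UNIV" by simp
  then have "card {0::'a, 1} \<le> card (UNIV::'a set)" by (rule card_mono[OF finite_UNIV])
  then show ?thesis by simp
qed

lemma n0_eq: "n0 = 6 * r" unfolding r_def n0_def using q6 card_ge2 by presburger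

lemma r_pos: "r \<ge> 1" unfolding r_def n0_def using q6 card_ge2 by presburger

lemma rho_n0: "\<rho> ^ n0 = 1" unfolding n0_def using fermat_ff[OF rho_nz] .

lemma pow_mod: "\<rho> ^ n = \<rho> ^ (n mod n0)"
proof -
  have "\<rho> ^ n = \<rho> ^ (n mod n0) * (\<rho> ^ n0) ^ (n div n0)"
    by (metis mod_div_mult_eq power_add power_mult mult.commute)
  then show ?thesis using rho_n0 by simp
qed

lemma n0_le: assumes "\<rho> ^ d = 1" "0 < d" shows "n0 \<le> d"
proof -
  have "UNIV - {0::'a} \<subseteq> (\<lambda>j. \<rho> ^ j) ` {..<d}"
  proof
    fix x :: 'a assume "x \<in> UNIV - {0}"
    then obtain j where j: "x = \<rho> ^ j" using ex_pow by auto
    have "\<rho> ^ j = \<rho> ^ (j mod d) * (\<rho> ^ d) ^ (j div d)"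
      by (metis mod_div_mult_eq power_add power_mult mult.commute)
    then have "x = \<rho> ^ (j mod d)" using j assms by simp
    moreover have "j mod d < d" using assms by simp
    ultimately show "x \<in> (\<lambda>j. \<rho> ^ j) ` {..<d}" by blast
  qed
  then have "card (UNIV - {0::'a}) \<le> card ((\<lambda>j. \<rho> ^ j) ` {..<d})"
    by (intro card_mono) auto
  also have "\<dots> \<le> d" using card_image_le[of "{..<d}" "\<lambda>j. \<rho> ^ j"] by simp
  finally show ?thesis unfolding n0_def by (simp add: card_Diff_singleton)
qed

lemma n0_pos: "n0 > 0" using n0_eq r_pos by simp

lemma pow_eq_le: assumes e: "\<rho> ^ n = \<rho> ^ m" and le: "n \<le> m" shows "n mod n0 = m mod n0"
proof -
  have "\<rho> ^ m = \<rho> ^ n * \<rho> ^ (m - n)" using le by (simp flip: power_add)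
  with e have "\<rho> ^ n * \<rho> ^ (m - n) = \<rho> ^ n * 1" by simp
  then have e1: "\<rho> ^ (m - n) = 1" using rho_nz mult_left_cancel[of "\<rho> ^ n" "\<rho> ^ (m - n)" 1] by simp
  have one: "\<rho> ^ ((m - n) mod n0) = 1" using pow_mod[of "m - n"] e1 by simp
  have "(m - n) mod n0 = 0"
  proof (rule ccontr)
    assume "(m - n) mod n0 \<noteq> 0"
    then have "n0 \<le> (m - n) mod n0" using n0_le[OF one] by simp
    moreover have "(m - n) mod n0 < n0" using n0_pos by simp
    ultimately show False by simp
  qed
  then have "n0 dvd m - n" by (rule mod_0_imp_dvd)
  then show ?thesis using mod_eq_dvd_iff_nat[OF le, of n0] by simp
qed

lemma pow_eq_iff: "\<rho> ^ n = \<rho> ^ m \<longleftrightarrow> n mod n0 = m mod n0"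
proof
  assume "n mod n0 = m mod n0" then show "\<rho> ^ n = \<rho> ^ m" using pow_mod[of n] pow_mod[of m] by simp
next
  assume e: "\<rho> ^ n = \<rho> ^ m"
  show "n mod n0 = m mod n0"
  proof (cases "n \<le> m")
    case True then show ?thesis using pow_eq_le[OF e] by simp
  next
    case False then show ?thesis using pow_eq_le[OF e[symmetric]] by simp
  qed
qed

definition dlog :: "'a \<Rightarrow> nat" where "dlog x = (SOME n. x = \<rho> ^ n)"
definition cls :: "'a \<Rightarrow> nat" where "cls x = dlog x mod 3"

lemma three_dvd: "3 dvd n0" unfolding n0_eq by (rule dvd_mult2) simp

lemma cls_pow: "cls (\<rho> ^ n) = n mod 3"
proof -
  have e: "\<rho> ^ n = \<rho> ^ dlog (\<rho> ^ n)" unfolding dlog_def by (rule someI[of "\<lambda>m. \<rho> ^ n = \<rho> ^ m" n]) (rule refl)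
  have "n mod n0 = dlog (\<rho> ^ n) mod n0" using pow_eq_iff[of n "dlog (\<rho> ^ n)"] e by blast
  then have "dlog (\<rho> ^ n) mod n0 = n mod n0" by (rule sym)
  then have "dlog (\<rho> ^ n) mod n0 mod 3 = n mod n0 mod 3" by simp
  then show ?thesis unfolding cls_def using three_dvd by (simp add: mod_mod_cancel)
qed

lemma cls_lt: "cls x < 3" by (simp add: cls_def)

lemma cls_mult: assumes "x \<noteq> 0" "y \<noteq> 0" shows "cls (x * y) = (cls x + cls y) mod 3"
proof -
  obtain a b where "x = \<rho> ^ a" "y = \<rho> ^ b" using ex_pow assms by metis
  then show ?thesis by (simp add: cls_pow flip: power_add) (simp add: mod_add_eq)
qed

lemma cls_one: "cls 1 = 0" using cls_pow[of 0] by simp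

lemma neg_one: "\<rho> ^ (3 * r) = -1"
proof -
  have "(\<rho> ^ (3 * r))^2 = 1" using rho_n0 n0_eq by (simp flip: power_mult)
  then have "\<rho> ^ (3 * r) = 1 \<or> \<rho> ^ (3 * r) = -1" by (simp add: power2_eq_1_iff)
  moreover have "\<rho> ^ (3 * r) \<noteq> \<rho> ^ 0"
    unfolding pow_eq_iff using n0_eq r_pos by simp
  ultimately show ?thesis by simp
qed

lemma cls_neg1: "cls (-1) = 0" using cls_pow[of "3*r"] neg_one by simp

lemma cls_neg: "x \<noteq> 0 \<Longrightarrow> cls (- x) = cls x"
  using cls_mult[of "-1" x] cls_neg1 cls_lt[of x] by simp

lemma cls_inv: "x \<noteq> 0 \<Longrightarrow> (cls x + cls (inverse x)) mod 3 = 0"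
  using cls_mult[of x "inverse x"] cls_one by simp

lemma cls_rho: "cls \<rho> = 1" using cls_pow[of 1] by simp
lemma cls_rho2: "cls (\<rho>^2) = 2" using cls_pow[of 2] by simp

lemma cyc_class_eq: assumes "i < 3" "q = card (UNIV::'a set)"
  shows "cyc_class q \<rho> i = {x. x \<noteq> 0 \<and> cls x = i}"
proof
  have rq: "(q - 1) div 6 = r" using assms(2) by (simp add: r_def n0_def)
  show "cyc_class q \<rho> i \<subseteq> {x. x \<noteq> 0 \<and> cls x = i}"
  proof
    fix x assume "x \<in> cyc_class q \<rho> i"
    then obtain j where "x = \<rho> ^ (3 * j + i)" unfolding cyc_class_def by blast
    moreover have "(3 * j + i) mod 3 = i" using assms(1) by simp
    ultimately show "x \<in> {x. x \<noteq> 0 \<and> cls x = i}" using rho_nz cls_pow by simp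
  qed
  show "{x. x \<noteq> 0 \<and> cls x = i} \<subseteq> cyc_class q \<rho> i"
  proof
    fix x assume "x \<in> {x. x \<noteq> 0 \<and> cls x = i}"
    then have x: "x \<noteq> 0" "cls x = i" by auto
    then obtain n where n: "x = \<rho> ^ n" using ex_pow by metis
    define m where "m = n mod n0"
    have xm: "x = \<rho> ^ m" using n pow_mod m_def by simp
    have mi: "m mod 3 = i" using x(2) xm cls_pow by simp
    have m6: "m < 6 * r" using m_def n0_eq n0_pos by simp
    have e1: "m = 3 * (m div 3) + i" using mi by presburger
    have e2: "m div 3 < 2 * r" using m6 by simp
    have "x = \<rho> ^ (3 * (m div 3) + i)" using xm e1 by simp
    then show "x \<in> cyc_class q \<rho> i" unfolding cyc_class_def rq using e2 by blast
  qed
qed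

lemma card_K2: "card {x. x \<noteq> 0 \<and> cls x = 2} = 2 * r"
proof -
  have "{x. x \<noteq> 0 \<and> cls x = 2} = cyc_class (card (UNIV::'a set)) \<rho> 2"
    using cyc_class_eq by simp
  also have "\<dots> = (\<lambda>j. \<rho> ^ (3 * j + 2)) ` {..<2*r}"
    unfolding cyc_class_def r_def n0_def by blast
  also have "card \<dots> = 2 * r"
  proof (rule card_image[THEN trans])
    show "inj_on (\<lambda>j. \<rho> ^ (3 * j + 2)) {..<2 * r}"
    proof (rule inj_onI)
      fix a b assume ab: "a \<in> {..<2 * r}" "b \<in> {..<2 * r}" "\<rho> ^ (3 * a + 2) = \<rho> ^ (3 * b + 2)"
      then have "(3 * a + 2) mod n0 = (3 * b + 2) mod n0" using pow_eq_iff by blast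
      moreover have "3 * a + 2 < n0" "3 * b + 2 < n0" using ab(1,2) n0_eq by auto
      ultimately show "a = b" by simp
    qed
  qed simp
  finally show ?thesis .
qed

definition Q :: "nat \<Rightarrow> nat \<Rightarrow> 'a set" where
  "Q a b = {s. s \<noteq> 0 \<and> s \<noteq> 1 \<and> cls s = a \<and> cls (s - 1) = b}"

lemma Q_swap_mem: "s \<in> Q a b \<Longrightarrow> 1 - s \<in> Q b a"
proof -
  assume s: "s \<in> Q a b"
  then have s0: "s \<noteq> 0" "s \<noteq> 1" by (auto simp: Q_def)
  have "1 - s = - (s - 1)" by simp
  then have "cls (1 - s) = cls (s - 1)" using cls_neg[of "s - 1"] s0 by simp
  moreover have "cls (1 - s - 1) = cls s" using cls_neg[of s] s0 by simp
  ultimately show ?thesis using s s0 by (auto simp: Q_def)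
qed

lemma Q_swap: "card (Q a b) = card (Q b a)"
proof -
  have "Q b a = (\<lambda>s. 1 - s) ` Q a b"
  proof
    show "(\<lambda>s. 1 - s) ` Q a b \<subseteq> Q b a" using Q_swap_mem by blast
    show "Q b a \<subseteq> (\<lambda>s. 1 - s) ` Q a b"
    proof
      fix t assume "t \<in> Q b a"
      then have "1 - t \<in> Q a b" by (rule Q_swap_mem)
      moreover have "t = 1 - (1 - t)" by simp
      ultimately show "t \<in> (\<lambda>s. 1 - s) ` Q a b" by blast
    qed
  qed
  moreover have "inj_on (\<lambda>s. 1 - s) (Q a b)" by (auto simp: inj_on_def)
  ultimately show ?thesis by (simp add: card_image)
qed

lemma cls_inv2: assumes "x \<noteq> 0" "cls x = a" shows "cls (inverse x) = (3 - a) mod 3"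
proof -
  have "(a + cls (inverse x)) mod 3 = 0" using cls_inv[OF assms(1)] assms(2) by simp
  moreover have "a \<in> {0,1,2}" "cls (inverse x) \<in> {0,1,2}" using assms(2) cls_lt[of x] cls_lt[of "inverse x"] by auto
  ultimately show ?thesis by (auto; presburger)
qed

lemma Q_inv_mem: assumes "s \<in> Q a b" shows "inverse s \<in> Q ((3 - a) mod 3) ((b + 3 - a) mod 3)"
proof -
  have s0: "s \<noteq> 0" "s \<noteq> 1" "cls s = a" "cls (s - 1) = b" using assms by (auto simp: Q_def)
  have a3: "a < 3" "b < 3" using s0 cls_lt by auto
  have ci: "cls (inverse s) = (3 - a) mod 3" using cls_inv2 s0 by simp
  have e: "inverse s - 1 = (1 - s) * inverse s" using s0 by (simp add: field_simps)
  have c1: "cls (1 - s) = b" using cls_neg[of "s - 1"] s0 by (metis minus_diff_eq right_minus_eq)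
  have "cls (inverse s - 1) = (b + (3 - a) mod 3) mod 3"
    unfolding e using cls_mult[of "1 - s" "inverse s"] s0 c1 ci by simp
  also have "\<dots> = (b + 3 - a) mod 3" using a3 by (cases a) auto
  finally have "cls (inverse s - 1) = (b + 3 - a) mod 3" .
  moreover have "inverse s \<noteq> 0" "inverse s \<noteq> 1" using s0 by auto
  ultimately show ?thesis using ci by (simp add: Q_def)
qed

lemma Q_inv: "card (Q 1 0) = card (Q 2 2)"
proof -
  have "Q 2 2 = inverse ` Q 1 0"
  proof
    show "inverse ` Q 1 0 \<subseteq> Q 2 2" using Q_inv_mem[of _ 1 0] by auto
    show "Q 2 2 \<subseteq> inverse ` Q 1 0"
    proof
      fix t assume "t \<in> Q 2 2"
      then have "inverse t \<in> Q 1 0" using Q_inv_mem[of t 2 2] by simp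
      moreover have "t = inverse (inverse t)" by simp
      ultimately show "t \<in> inverse ` Q 1 0" by blast
    qed
  qed
  moreover have "inj_on inverse (Q 1 0)" by (auto simp: inj_on_def)
  ultimately show ?thesis by (simp add: card_image)
qed

lemma row2: "card {x. x \<noteq> 0 \<and> cls x = 2} = card (Q 2 0) + card (Q 2 1) + card (Q 2 2)"
proof -
  have "{x. x \<noteq> 0 \<and> cls x = 2} = (Q 2 0 \<union> Q 2 1) \<union> Q 2 2"
  proof
    show "{x. x \<noteq> 0 \<and> cls x = 2} \<subseteq> (Q 2 0 \<union> Q 2 1) \<union> Q 2 2"
    proof
      fix x assume x: "x \<in> {x. x \<noteq> 0 \<and> cls x = 2}"
      then have "x \<noteq> 1" using cls_one by auto
      moreover have "cls (x - 1) < 3" by (rule cls_lt)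
      ultimately show "x \<in> (Q 2 0 \<union> Q 2 1) \<union> Q 2 2" using x unfolding Q_def by auto
    qed
    show "(Q 2 0 \<union> Q 2 1) \<union> Q 2 2 \<subseteq> {x. x \<noteq> 0 \<and> cls x = 2}" unfolding Q_def by auto
  qed
  moreover have "Q 2 0 \<inter> Q 2 1 = {}" "(Q 2 0 \<union> Q 2 1) \<inter> Q 2 2 = {}" unfolding Q_def by auto
  ultimately show ?thesis by (simp add: card_Un_disjoint)
qed

lemma c_Q: "(\<lambda>x. x + 1) ` {x. x \<noteq> 0 \<and> cls x = 1} \<inter> {x. x \<noteq> 0 \<and> cls x = 2} = Q 2 1"
proof
  show "(\<lambda>x. x + 1) ` {x. x \<noteq> 0 \<and> cls x = 1} \<inter> {x. x \<noteq> 0 \<and> cls x = 2} \<subseteq> Q 2 1"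
    unfolding Q_def by auto
  show "Q 2 1 \<subseteq> (\<lambda>x. x + 1) ` {x. x \<noteq> 0 \<and> cls x = 1} \<inter> {x. x \<noteq> 0 \<and> cls x = 2}"
  proof
    fix s assume s: "s \<in> Q 2 1"
    then have "s - 1 \<in> {x. x \<noteq> 0 \<and> cls x = 1}" "s = (s - 1) + 1" unfolding Q_def by auto
    then show "s \<in> (\<lambda>x. x + 1) ` {x. x \<noteq> 0 \<and> cls x = 1} \<inter> {x. x \<noteq> 0 \<and> cls x = 2}"
      using s unfolding Q_def by blast
  qed
qed

lemma even_Q21: assumes "card (Q 0 1) + card (Q 1 0) = card (Q 0 2) + card (Q 2 0)"
  shows "even (card (Q 2 1))"
proof -
  have "card (Q 1 0) = card (Q 2 0)" using assms Q_swap[of 0 1] Q_swap[of 0 2] by simp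
  then have "card (Q 2 2) = card (Q 2 0)" using Q_inv by simp
  then have "2 * r = 2 * card (Q 2 0) + card (Q 2 1)" using row2 card_K2 by simp
  then show ?thesis by presburger
qed

definition T :: "'a \<Rightarrow> 'a set" where
  "T u = {t. t \<noteq> 0 \<and> t \<noteq> u \<and> cls t \<noteq> 0 \<and> cls (t - u) \<noteq> 0 \<and> cls t \<noteq> cls (t - u)}"

definition R :: "nat \<Rightarrow> 'a set" where
  "R e = {s. s \<noteq> 0 \<and> s \<noteq> 1 \<and> (e + cls s) mod 3 \<noteq> 0 \<and> (e + cls (s - 1)) mod 3 \<noteq> 0
             \<and> cls s \<noteq> cls (s - 1)}"

lemma T_R: assumes u: "u \<noteq> 0" shows "card (T u) = card (R (cls u))"
proof -
  have mem: "u * s \<in> T u \<longleftrightarrow> s \<in> R (cls u)" for s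
  proof (cases "s = 0 \<or> s = 1")
    case True then show ?thesis using u by (auto simp: T_def R_def)
  next
    case False
    then have s0: "s \<noteq> 0" "s - 1 \<noteq> 0" by auto
    have e: "u * s - u = u * (s - 1)" by (simp add: algebra_simps)
    have c1: "cls (u * s) = (cls u + cls s) mod 3" using cls_mult u s0 by simp
    have c2: "cls (u * s - u) = (cls u + cls (s - 1)) mod 3" unfolding e using cls_mult u s0 by simp
    have lt: "cls u < 3" "cls s < 3" "cls (s - 1) < 3" using cls_lt by auto
    have "cls (u * s) \<noteq> cls (u * s - u) \<longleftrightarrow> cls s \<noteq> cls (s - 1)"
      unfolding c1 c2 using mod3_cancel[OF lt(2,3), of "cls u"] by simp
    then show ?thesis using False u s0 c1 c2 by (auto simp: T_def R_def)
  qed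
  have "T u = (\<lambda>s. u * s) ` R (cls u)"
  proof
    show "(\<lambda>s. u * s) ` R (cls u) \<subseteq> T u" using mem by auto
    show "T u \<subseteq> (\<lambda>s. u * s) ` R (cls u)"
    proof
      fix t assume t: "t \<in> T u"
      have "t = u * (t / u)" using u by simp
      then have "t / u \<in> R (cls u)" using mem[of "t / u"] t by simp
      then show "t \<in> (\<lambda>s. u * s) ` R (cls u)" using \<open>t = u * (t / u)\<close> by blast
    qed
  qed
  moreover have "inj_on (\<lambda>s. u * s) (R (cls u))" using u by (auto simp: inj_on_def)
  ultimately show ?thesis by (simp add: card_image)
qed

lemma R1: "card (R 1) = card (Q 0 1) + card (Q 1 0)"
proof -
  have "R 1 = Q 0 1 \<union> Q 1 0"
  proof
    show "R 1 \<subseteq> Q 0 1 \<union> Q 1 0"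
    proof
      fix s assume s: "s \<in> R 1"
      have "cls s \<in> {0,1,2}" "cls (s - 1) \<in> {0,1,2}" using cls_lt[of s] cls_lt[of "s - 1"] by auto
      then show "s \<in> Q 0 1 \<union> Q 1 0" using s unfolding R_def Q_def by auto
    qed
    show "Q 0 1 \<union> Q 1 0 \<subseteq> R 1" unfolding R_def Q_def by auto
  qed
  moreover have "Q 0 1 \<inter> Q 1 0 = {}" unfolding Q_def by auto
  ultimately show ?thesis by (simp add: card_Un_disjoint)
qed

lemma R2: "card (R 2) = card (Q 0 2) + card (Q 2 0)"
proof -
  have "R 2 = Q 0 2 \<union> Q 2 0"
  proof
    show "R 2 \<subseteq> Q 0 2 \<union> Q 2 0"
    proof
      fix s assume s: "s \<in> R 2"
      have "cls s \<in> {0,1,2}" "cls (s - 1) \<in> {0,1,2}" using cls_lt[of s] cls_lt[of "s - 1"] by auto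
      then show "s \<in> Q 0 2 \<union> Q 2 0" using s unfolding R_def Q_def by auto
    qed
    show "Q 0 2 \<union> Q 2 0 \<subseteq> R 2" unfolding R_def Q_def by auto
  qed
  moreover have "Q 0 2 \<inter> Q 2 0 = {}" unfolding Q_def by auto
  ultimately show ?thesis by (simp add: card_Un_disjoint)
qed

lemma field_main: assumes "card (T \<rho>) = card (T (\<rho>^2))" shows "even (card (Q 2 1))"
  using assms T_R[of \<rho>] T_R[of "\<rho>^2"] rho_nz cls_rho cls_rho2 R1 R2 even_Q21 by simp

lemma powi_mod: "\<rho> powi j = \<rho> ^ nat (j mod int n0)"
proof -
  have j: "j = int n0 * (j div int n0) + j mod int n0" by simp
  have "\<rho> powi j = \<rho> powi (int n0 * (j div int n0)) * \<rho> powi (j mod int n0)"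
    by (subst j) (rule power_int_add, simp add: rho_nz)
  also have "\<rho> powi (int n0 * (j div int n0)) = 1"
    by (simp add: power_int_mult rho_n0)
  also have "\<rho> powi (j mod int n0) = \<rho> ^ nat (j mod int n0)"
  proof -
    have nn: "j mod int n0 = int (nat (j mod int n0))" using n0_pos by simp
    show ?thesis by (metis nn power_int_of_nat)
  qed
  finally show ?thesis by simp
qed

lemma cls_powi: "int (cls (\<rho> powi j)) = j mod 3"
proof -
  have "int (cls (\<rho> powi j)) = int (nat (j mod int n0) mod 3)" by (simp add: powi_mod cls_pow)
  also have "\<dots> = (j mod int n0) mod 3" using n0_pos by (simp add: zmod_int)
  also have "\<dots> = j mod 3"
  proof -
    have "(3::int) dvd int n0" using three_dvd int_dvd_int_iff[of 3 n0] by simp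
    then show ?thesis by (simp add: mod_mod_cancel)
  qed
  finally show ?thesis .
qed

lemma powi_nz: "\<rho> powi j \<noteq> 0" using rho_nz by simp

lemma ex_powi_iff: assumes "m < 3"
  shows "(\<exists>j::int. v = \<rho> powi j \<and> j mod 3 = int m mod 3) \<longleftrightarrow> v \<noteq> 0 \<and> cls v = m"
proof
  assume "\<exists>j::int. v = \<rho> powi j \<and> j mod 3 = int m mod 3"
  then obtain j where j: "v = \<rho> powi j" "j mod 3 = int m mod 3" by blast
  then have "int (cls v) = int m" using cls_powi assms by simp
  then show "v \<noteq> 0 \<and> cls v = m" using j powi_nz by simp
next
  assume v: "v \<noteq> 0 \<and> cls v = m"
  then obtain n where n: "v = \<rho> ^ n" using ex_pow by metis
  then have "v = \<rho> powi int n" by simp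
  moreover have "int n mod 3 = int m mod 3"
  proof -
    have "n mod 3 = m" using v n cls_pow by simp
    moreover have "int (n mod 3) = int n mod 3" using of_nat_mod[of n 3] by simp
    moreover have "int m mod 3 = int m" using assms by simp
    ultimately show ?thesis by simp
  qed
  ultimately show "\<exists>j::int. v = \<rho> powi j \<and> j mod 3 = int m mod 3" by blast
qed

end


definition zx :: "bool \<times> bool \<Rightarrow> bool \<times> bool \<Rightarrow> bool \<times> bool" where
  "zx y w = (fst y \<noteq> fst w, snd y \<noteq> snd w)"

lemma G_minus_eq: "G_minus l (a, y, t) (b, w, v) = ((a + l - b) mod l, zx y w, t - v)"
  by (cases y; cases w) (simp add: zx_def)

lemma zx_zero_iff: "zx y w = z2zero \<longleftrightarrow> y = w"
  by (cases y; cases w) (auto simp: zx_def z2zero_def)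
lemma zx_eq_right: "zx y w = w \<longleftrightarrow> y = z2zero"
  by (cases y; cases w) (auto simp: zx_def z2zero_def)
lemma zx_eq_left: "zx y w = y \<longleftrightarrow> w = z2zero"
  by (cases y; cases w) (auto simp: zx_def z2zero_def)
lemma zx_zx: "zx (zx y w) w = y"
  by (cases y; cases w) (auto simp: zx_def)
lemma zx_z0: "zx y z2zero = y"
  by (cases y) (auto simp: zx_def z2zero_def)

lemma three_vals: "(a::nat) < 3 \<Longrightarrow> b < 3 \<Longrightarrow> c < 3 \<Longrightarrow> c \<noteq> 0 \<Longrightarrow> a \<noteq> 0 \<Longrightarrow> a \<noteq> c \<Longrightarrow> b \<noteq> 0 \<Longrightarrow> b \<noteq> c \<Longrightarrow> a = b"
  by presburger

locale gr = cyc \<rho> for \<rho> :: "'a::{finite,field}" +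
  fixes \<pi> :: "bool \<times> bool \<Rightarrow> nat" and l :: nat
  assumes bij: "bij_betw \<pi> {z. z \<noteq> z2zero} {0..<3}"
    and lpos: "l > 0"
begin

lemma pi_lt: "z \<noteq> z2zero \<Longrightarrow> \<pi> z < 3" using bij by (auto simp: bij_betw_def)
lemma pi_inj: "y \<noteq> z2zero \<Longrightarrow> w \<noteq> z2zero \<Longrightarrow> \<pi> y = \<pi> w \<Longrightarrow> y = w"
  using bij unfolding bij_betw_def inj_on_def by blast

definition Y :: "nat \<Rightarrow> bool \<times> bool" where "Y m = the_inv_into {z. z \<noteq> z2zero} \<pi> m"

lemma Y_prop: "m < 3 \<Longrightarrow> Y m \<noteq> z2zero \<and> \<pi> (Y m) = m"
proof -
  assume "m < 3"
  then have m: "m \<in> {0..<3}" by simp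
  have "Y m \<in> {z. z \<noteq> z2zero}" unfolding Y_def
    using the_inv_into_into[of \<pi> "{z. z \<noteq> z2zero}" m "{z. z \<noteq> z2zero}"] bij m
    by (auto simp: bij_betw_def)
  moreover have "\<pi> (Y m) = m" unfolding Y_def
    using f_the_inv_into_f[of \<pi> "{z. z \<noteq> z2zero}" m] bij m by (auto simp: bij_betw_def)
  ultimately show ?thesis by simp
qed

lemma Y_pi: "y \<noteq> z2zero \<Longrightarrow> Y (\<pi> y) = y"
  using Y_prop[of "\<pi> y"] pi_lt pi_inj by blast

lemma memS: "(a, z, v) \<in> S_pi l \<rho> \<pi> \<longleftrightarrow>
   (v = 0 \<and> a < l \<and> (a \<noteq> 0 \<or> z \<noteq> z2zero)) \<or> (v \<noteq> 0 \<and> a = 0 \<and> z \<noteq> z2zero \<and> cls v = \<pi> z)"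
proof -
  have A: "(a, z, v) \<in> S0 l \<longleftrightarrow> v = 0 \<and> a < l \<and> (a \<noteq> 0 \<or> z \<noteq> z2zero)"
    by (cases z) (auto simp: S0_def)
  have B: "(a, z, v) \<in> (\<Union>z \<in> {z. z \<noteq> z2zero}. Sz \<rho> \<pi> z) \<longleftrightarrow>
     z \<noteq> z2zero \<and> a = 0 \<and> (\<exists>j::int. v = \<rho> powi j \<and> j mod 3 = int (\<pi> z) mod 3)"
    by (auto simp: Sz_def)
  have C: "z \<noteq> z2zero \<Longrightarrow> (\<exists>j::int. v = \<rho> powi j \<and> j mod 3 = int (\<pi> z) mod 3) \<longleftrightarrow> v \<noteq> 0 \<and> cls v = \<pi> z"
    using ex_powi_iff pi_lt by blast
  show ?thesis unfolding S_pi_def Un_iff A B using C by blast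
qed

definition x0 :: "'a gvtx" where "x0 = (0, z2zero, 0)"

lemma adj_x0: "b < l \<Longrightarrow> cay_adj l \<rho> \<pi> x0 (b, y, t) \<longleftrightarrow> (b, y, t) \<in> S_pi l \<rho> \<pi>"
  by (simp add: cay_adj_def x0_def G_minus_eq zx_z0)

lemma adj_d: "b < l \<Longrightarrow> cay_adj l \<rho> \<pi> (0, z0, u) (b, y, t) \<longleftrightarrow> (b, zx y z0, t - u) \<in> S_pi l \<rho> \<pi>"
  by (simp add: cay_adj_def G_minus_eq)

lemma memW: "(b, y, t) \<in> {w \<in> G_carrier l. cay_adj l \<rho> \<pi> x0 w \<and> cay_adj l \<rho> \<pi> (0, z0, u) w}
   \<longleftrightarrow> b < l \<and> (b, y, t) \<in> S_pi l \<rho> \<pi> \<and> (b, zx y z0, t - u) \<in> S_pi l \<rho> \<pi>"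
  using adj_x0[of b y t] adj_d[of b z0 u y t] by (auto simp: G_carrier_def)

lemma W_card:
  assumes z0: "z0 \<noteq> z2zero" "\<pi> z0 = 0" and u: "u \<noteq> 0" "cls u \<noteq> 0"
  shows "card {w \<in> G_carrier l. cay_adj l \<rho> \<pi> x0 w \<and> cay_adj l \<rho> \<pi> (0, z0, u) w} = card (T u) + 2"
proof -
  define W where "W = {w \<in> G_carrier l. cay_adj l \<rho> \<pi> x0 w \<and> cay_adj l \<rho> \<pi> (0, z0, u) w}"
  define Yu where "Yu = Y (cls u)"
  have Yu: "Yu \<noteq> z2zero" "\<pi> Yu = cls u" using Y_prop[of "cls u"] cls_lt Yu_def by auto
  have Yuz: "Yu \<noteq> z0" using Yu z0 u by auto
  have zYu: "zx Yu z0 \<noteq> z2zero" using Yuz zx_zero_iff by blast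
  define f where "f = (\<lambda>t. (0::nat, Y (cls t), t))"
  define w1 where "w1 = (0::nat, zx Yu z0, 0::'a)"
  define w2 where "w2 = (0::nat, Yu, u)"
  have cneg: "cls (- u) = cls u" using cls_neg u by simp
  have eq: "W = insert w1 (insert w2 (f ` T u))"
  proof
    show "W \<subseteq> insert w1 (insert w2 (f ` T u))"
    proof
      fix w assume "w \<in> W"
      moreover obtain b y t where w: "w = (b, y, t)" by (cases w) auto
      ultimately have m: "b < l" "(b, y, t) \<in> S_pi l \<rho> \<pi>" "(b, zx y z0, t - u) \<in> S_pi l \<rho> \<pi>"
        using memW unfolding W_def by blast+
      show "w \<in> insert w1 (insert w2 (f ` T u))"
      proof (cases "t = 0")
        case True
        then have "b = 0" "zx y z0 \<noteq> z2zero" "cls u = \<pi> (zx y z0)"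
          using m(3) u cneg by (auto simp: memS)
        then have "zx y z0 = Yu" using Yu_def Y_pi by metis
        then have "y = zx Yu z0" using zx_zx by metis
        then show ?thesis using True \<open>b = 0\<close> w w1_def by simp
      next
        case t0: False
        show ?thesis
        proof (cases "t = u")
          case True
          then have "b = 0" "y \<noteq> z2zero" "cls u = \<pi> y" using m(2) t0 by (auto simp: memS)
          then have "y = Yu" using Yu_def Y_pi by metis
          then show ?thesis using True \<open>b = 0\<close> w w2_def by simp
        next
          case False
          then have tu: "t - u \<noteq> 0" by simp
          have h1: "b = 0" "y \<noteq> z2zero" "cls t = \<pi> y" using m(2) t0 by (auto simp: memS)
          have h2: "zx y z0 \<noteq> z2zero" "cls (t - u) = \<pi> (zx y z0)" using m(3) tu by (auto simp: memS)
          have yz: "y \<noteq> z0" using h2(1) zx_zero_iff by blast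
          have n1: "zx y z0 \<noteq> z0" using h1(2) zx_eq_right by blast
          have n2: "zx y z0 \<noteq> y" using z0(1) zx_eq_left by blast
          have "cls t \<noteq> 0" using h1 z0 yz pi_inj by metis
          moreover have "cls (t - u) \<noteq> 0" using h2 z0 n1 pi_inj by metis
          moreover have "cls t \<noteq> cls (t - u)" using h1 h2 n2 pi_inj by metis
          ultimately have "t \<in> T u" using t0 False by (simp add: T_def)
          moreover have "w = f t" using w h1 Y_pi f_def by simp
          ultimately show ?thesis by blast
        qed
      qed
    qed
    show "insert w1 (insert w2 (f ` T u)) \<subseteq> W"
    proof -
      have "w1 \<in> W" unfolding w1_def W_def using memW lpos zYu Yu u cneg
        by (simp add: memS zx_zx)
      moreover have "w2 \<in> W" unfolding w2_def W_def using memW lpos zYu Yu u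
        by (simp add: memS)
      moreover have "f t \<in> W" if t: "t \<in> T u" for t
      proof -
        have t1: "t \<noteq> 0" "t \<noteq> u" "cls t \<noteq> 0" "cls (t - u) \<noteq> 0" "cls t \<noteq> cls (t - u)"
          using t by (auto simp: T_def)
        define y where "y = Y (cls t)"
        have y: "y \<noteq> z2zero" "\<pi> y = cls t" using Y_prop[of "cls t"] cls_lt y_def by auto
        have yz: "y \<noteq> z0" using y z0 t1 by auto
        have zy: "zx y z0 \<noteq> z2zero" using yz zx_zero_iff by blast
        have n1: "zx y z0 \<noteq> z0" using y(1) zx_eq_right by blast
        have n2: "zx y z0 \<noteq> y" using z0(1) zx_eq_left by blast
        have p1: "\<pi> (zx y z0) \<noteq> 0" using n1 zy z0 pi_inj by metis
        have p2: "\<pi> (zx y z0) \<noteq> cls t" using n2 zy y pi_inj by metis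
        have "\<pi> (zx y z0) = cls (t - u)"
          using three_vals[OF pi_lt[OF zy] cls_lt[of "t - u"] cls_lt[of t] t1(3) p1 p2 t1(4)] t1(5)
          by simp
        then show ?thesis unfolding W_def f_def y_def[symmetric] using memW lpos t1 y zy
          by (simp add: memS)
      qed
      ultimately show ?thesis by blast
    qed
  qed
  have "w1 \<noteq> w2" using u by (simp add: w1_def w2_def)
  moreover have "w1 \<notin> f ` T u" "w2 \<notin> f ` T u" by (auto simp: f_def w1_def w2_def T_def)
  moreover have "inj_on f (T u)" by (auto simp: inj_on_def f_def)
  ultimately have "card W = card (T u) + 2" unfolding eq by (simp add: card_image)
  then show ?thesis unfolding W_def .
qed

end


theorem corollary4p4:
  fixes \<rho> :: "'a::{finite,field}"
    and \<pi> :: "bool \<times> bool \<Rightarrow> nat"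
    and q c l :: nat
  assumes "q = card (UNIV :: 'a set)"
    and "q mod 6 = 1"
    and "primitive_element \<rho>"
    and "bij_betw \<pi> {z. z \<noteq> z2zero} {0..<3}"
    and "c = cyc_number q \<rho> 1 2"
    and "odd c"
    and "l = (c + 1) div 2"
  shows "\<not> strongly_regular (G_carrier l :: 'a gvtx set) (cay_adj l \<rho> \<pi>)"
proof
  assume srg: "strongly_regular (G_carrier l :: 'a gvtx set) (cay_adj l \<rho> \<pi>)"
  have lpos: "l > 0" using assms(6,7) by presburger
  interpret gr \<rho> \<pi> l
    by unfold_locales (use assms lpos in auto)
  obtain mu where mu: "\<forall>x\<in>G_carrier l. \<forall>y\<in>G_carrier l. x \<noteq> y \<and> \<not> cay_adj l \<rho> \<pi> x y \<longrightarrow>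
      card {w\<in>G_carrier l. cay_adj l \<rho> \<pi> x w \<and> cay_adj l \<rho> \<pi> y w} = mu"
    using srg unfolding strongly_regular_def by blast
  have "(0::nat) \<in> \<pi> ` {z. z \<noteq> z2zero}" using assms(4) by (auto simp: bij_betw_def)
  then obtain z0 where z0: "z0 \<noteq> z2zero" "\<pi> z0 = 0" by auto
  have x0V: "x0 \<in> (G_carrier l :: 'a gvtx set)" using lpos by (simp add: x0_def G_carrier_def)
  have key: "card {w\<in>G_carrier l. cay_adj l \<rho> \<pi> x0 w \<and> cay_adj l \<rho> \<pi> (0, z0, u) w} = mu"
    if u: "u \<noteq> 0" "cls u \<noteq> 0" for u
  proof -
    have dV: "(0, z0, u) \<in> (G_carrier l :: 'a gvtx set)" using lpos by (simp add: G_carrier_def)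
    have ne: "x0 \<noteq> (0, z0, u)" using z0 by (simp add: x0_def)
    have "\<not> cay_adj l \<rho> \<pi> x0 (0, z0, u)" using adj_x0[of 0 z0 u] lpos memS u z0 by simp
    then show ?thesis using mu x0V dV ne by blast
  qed
  have "card (T \<rho>) + 2 = card (T (\<rho>^2)) + 2"
    using key[of \<rho>] key[of "\<rho>^2"] W_card[OF z0, of \<rho>] W_card[OF z0, of "\<rho>^2"]
      rho_nz cls_rho cls_rho2 by simp
  then have "even (card (Q 2 1))" using field_main by simp
  moreover have "c = card (Q 2 1)"
    using assms(5) cyc_class_eq[of 1 q] cyc_class_eq[of 2 q] assms(1) c_Q
    by (simp add: cyc_number_def)
  ultimately show False using assms(6) by simp
qed

end
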